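(* Let $n\ge 2$ and let $A\in\Sigma_{n^2}$. Then the number $\xi_n$ of all matrices $B\in\Sigma_{n^2}$ which are disjoint with $A$ does not depend on $A$ and is equal to $$\xi_n=\sum_{\overline{A}\in\overline{\mathfrak{B}}_n,\ \varepsilon(\overline{A})\ge 2}(-1)^{\varepsilon(\overline{A})}\,|\overline{A}|\prod_{i=0}^{n-2}\left[(n-i)!\right]^{\psi_i(\overline{A})}.$$
   Context: $\Sigma_{n^2}$ is the set of $n^2\times n^2$ binary matrices which, when partitioned into $n^2$ non-intersecting consecutive $n\times n$ blocks, contain exactly one $1$ in each row, each column and each block (S-permutation matrices). Two binary matrices $(a_{ij}),(b_{ij})$ of equal size are disjoint if there are no $i,j$ with $a_{ij}=b_{ij}=1$. $\mathfrak{B}_n$ is the set of $n\times n$ binary matrices. For $A\in\mathfrak{B}_n$, $r_k(A)$ (resp. $c_k(A)$) is the number of rows (resp. columns) of $A$ with exactly $k$ ones, $\psi_k(A)=r_k(A)+c_k(A)$, and $\varepsilon(A)$ is the total number of ones of $A$. $A\sim B$ iff $B$ is obtained from $A$ by permuting rows; $\overline{A}$ denotes the equivalence class of $A$, $|\overline{A}|$ its cardinality, $\overline{\mathfrak{B}}_n=\mathfrak{B}_n/\!\sim$; $\psi_k,\varepsilon$ are defined on classes via any representative. *)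

theory Defs
  imports "HOL-Combinatorics.Permutations"
begin

text \<open>A binary m x m matrix is represented by the set of positions (i,j),
  i,j < m (0-based), of its entries equal to 1.\<close>

definition binmat :: "nat \<Rightarrow> (nat \<times> nat) set set" where
  "binmat m = Pow ({..<m} \<times> {..<m})"

definition row_ones :: "(nat \<times> nat) set \<Rightarrow> nat \<Rightarrow> nat" where
  "row_ones A i = card {j. (i, j) \<in> A}"

definition col_ones :: "(nat \<times> nat) set \<Rightarrow> nat \<Rightarrow> nat" where
  "col_ones A j = card {i. (i, j) \<in> A}"

definition spm :: "nat \<Rightarrow> (nat \<times> nat) set set" where
  "spm n = {A \<in> binmat (n^2).
      (\<forall>i < n^2. row_ones A i = 1) \<and>
      (\<forall>j < n^2. col_ones A j = 1) \<and>
      (\<forall>p < n. \<forall>q < n. card {(i, j) \<in> A. i div n = p \<and> j div n = q} = 1)}"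

definition disjoint_mat :: "(nat \<times> nat) set \<Rightarrow> (nat \<times> nat) set \<Rightarrow> bool" where
  "disjoint_mat A B \<longleftrightarrow> A \<inter> B = {}"

definition r_k :: "nat \<Rightarrow> nat \<Rightarrow> (nat \<times> nat) set \<Rightarrow> nat" where
  "r_k n k A = card {i. i < n \<and> row_ones A i = k}"

definition c_k :: "nat \<Rightarrow> nat \<Rightarrow> (nat \<times> nat) set \<Rightarrow> nat" where
  "c_k n k A = card {j. j < n \<and> col_ones A j = k}"

definition psi :: "nat \<Rightarrow> nat \<Rightarrow> (nat \<times> nat) set \<Rightarrow> nat" where
  "psi n k A = r_k n k A + c_k n k A"

definition eps :: "(nat \<times> nat) set \<Rightarrow> nat" where
  "eps A = card A"

definition row_equiv :: "nat \<Rightarrow> ((nat \<times> nat) set \<times> (nat \<times> nat) set) set" where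
  "row_equiv n = {(A, B). A \<in> binmat n \<and> B \<in> binmat n \<and>
      (\<exists>\<sigma>. \<sigma> permutes {..<n} \<and> B = (\<lambda>(i, j). (\<sigma> i, j)) ` A)}"

definition classes :: "nat \<Rightarrow> (nat \<times> nat) set set set" where
  "classes n = binmat n // row_equiv n"

text \<open>Functions on classes are evaluated at an (arbitrary) representative.\<close>

definition rep :: "(nat \<times> nat) set set \<Rightarrow> (nat \<times> nat) set" where
  "rep C = (SOME A. A \<in> C)"

end

theory Submission
  imports Defs
begin


lemma perm_fix_card:
  assumes "finite S" "D \<subseteq> S"
  shows "card {f. f permutes S \<and> (\<forall>x\<in>D. f x = x)} = fact (card S - card D)"
proof -
  have "{f. f permutes S \<and> (\<forall>x\<in>D. f x = x)} = {f. f permutes (S - D)}"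
  proof (intro set_eqI iffI)
    fix f assume "f \<in> {f. f permutes S \<and> (\<forall>x\<in>D. f x = x)}"
    then show "f \<in> {f. f permutes (S - D)}" unfolding permutes_def by auto
  next
    fix f assume "f \<in> {f. f permutes (S - D)}"
    then have "f permutes (S - D)" by simp
    then show "f \<in> {f. f permutes S \<and> (\<forall>x\<in>D. f x = x)}"
      using permutes_subset[of f "S - D" S] permutes_not_in[of f "S - D"] by auto
  qed
  moreover have "card (S - D) = card S - card D"
    using assms by (simp add: card_Diff_subset finite_subset)
  ultimately show ?thesis using assms card_permutations[of "S - D"] by simp
qed

lemma perm_ext:
  assumes "finite S" "D \<subseteq> S" "inj_on g D" "g ` D \<subseteq> S"
  shows "\<exists>r. r permutes S \<and> (\<forall>x\<in>D. r x = g x)"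
proof -
  have fD: "finite D" using assms finite_subset by blast
  have "card (S - D) = card (S - g ` D)"
    using assms fD by (simp add: card_Diff_subset card_image finite_subset)
  then obtain h where h: "bij_betw h (S - D) (S - g ` D)"
    using finite_same_card_bij[of "S - D" "S - g ` D"] assms by auto
  define r where "r x = (if x \<in> D then g x else if x \<in> S then h x else x)" for x
  have b1: "bij_betw r D (g ` D)"
  proof -
    have "bij_betw g D (g ` D)" using assms(3) by (rule inj_on_imp_bij_betw)
    moreover have "\<And>a. a \<in> D \<Longrightarrow> r a = g a" by (simp add: r_def)
    ultimately show ?thesis using bij_betw_cong by metis
  qed
  have b2: "bij_betw r (S - D) (S - g ` D)"
  proof -
    have "\<And>a. a \<in> S - D \<Longrightarrow> r a = h a" by (simp add: r_def)
    then show ?thesis using h bij_betw_cong by metis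
  qed
  have "bij_betw r (D \<union> (S - D)) (g ` D \<union> (S - g ` D))"
    by (rule bij_betw_combine[OF b1 b2]) auto
  moreover have "D \<union> (S - D) = S" "g ` D \<union> (S - g ` D) = S" using assms by auto
  ultimately have "bij_betw r S S" by simp
  moreover have "\<And>x. x \<notin> S \<Longrightarrow> r x = x" using assms(2) by (auto simp: r_def)
  ultimately have "r permutes S" by (rule bij_imp_permutes)
  then show ?thesis by (auto simp: r_def)
qed

lemma perm_count:
  assumes "finite S" "D \<subseteq> S" "inj_on g D" "g ` D \<subseteq> S"
  shows "card {f. f permutes S \<and> (\<forall>x\<in>D. f x = g x)} = fact (card S - card D)"
proof -
  obtain r where r: "r permutes S" "\<forall>x\<in>D. r x = g x" using perm_ext[OF assms] by blast
  let ?X = "{f. f permutes S \<and> (\<forall>x\<in>D. f x = g x)}"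
  let ?Y = "{f. f permutes S \<and> (\<forall>x\<in>D. f x = x)}"
  have "?X = (\<lambda>h. r \<circ> h) ` ?Y"
  proof (intro set_eqI iffI)
    fix f assume f: "f \<in> ?X"
    have fp: "f permutes S" and fg: "\<forall>x\<in>D. f x = g x" using f by auto
    have "inv r \<circ> f permutes S" by (rule permutes_compose[OF fp permutes_inv[OF r(1)]])
    moreover have "\<forall>x\<in>D. (inv r \<circ> f) x = x"
      using fg r(2) permutes_inverses(2)[OF r(1)] by (simp add: o_def) metis
    ultimately have "inv r \<circ> f \<in> ?Y" by simp
    moreover have "f = r \<circ> (inv r \<circ> f)"
      using permutes_inverses[OF r(1)] by (auto simp: o_def)
    ultimately show "f \<in> (\<lambda>h. r \<circ> h) ` ?Y" by blast
  next
    fix f assume "f \<in> (\<lambda>h. r \<circ> h) ` ?Y"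
    then obtain h where h: "h permutes S" "\<forall>x\<in>D. h x = x" "f = r \<circ> h" by blast
    have "f permutes S" unfolding h(3) by (rule permutes_compose[OF h(1) r(1)])
    moreover have "\<forall>x\<in>D. f x = g x" using h(2,3) r(2) by simp
    ultimately show "f \<in> ?X" by simp
  qed
  moreover have "inj_on (\<lambda>h. r \<circ> h) ?Y"
  proof (rule inj_onI)
    fix h h' assume "r \<circ> h = r \<circ> h'"
    then have e: "\<And>x. r (h x) = r (h' x)" by (metis comp_apply)
    show "h = h'"
    proof
      fix x
      have "inv r (r (h x)) = inv r (r (h' x))" using e by simp
      then show "h x = h' x" by (simp add: permutes_inverses(2)[OF r(1)])
    qed
  qed
  ultimately have "card ?X = card ?Y" by (simp add: card_image)
  then show ?thesis using perm_fix_card[OF assms(1,2)] by simp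
qed

lemma sign_sum:
  assumes "finite T"
  shows "(\<Sum>M\<in>Pow T. (-1::int) ^ card M) = (if T = {} then 1 else 0)"
  using assms
proof (induction T rule: finite_induct)
  case empty then show ?case by simp
next
  case (insert x T)
  have P: "Pow (insert x T) = Pow T \<union> insert x ` Pow T" by (rule Pow_insert)
  have D: "Pow T \<inter> insert x ` Pow T = {}" using insert.hyps(2) by blast
  have I: "inj_on (insert x) (Pow T)"
  proof (rule inj_onI)
    fix M M' assume "M \<in> Pow T" "M' \<in> Pow T" "insert x M = insert x M'"
    then have "x \<notin> M" "x \<notin> M'" "insert x M = insert x M'" using insert.hyps(2) by auto
    then show "M = M'" by (metis Diff_insert_absorb)
  qed
  have C: "\<And>M. M \<in> Pow T \<Longrightarrow> card (insert x M) = Suc (card M)"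
  proof -
    fix M assume "M \<in> Pow T"
    then have "finite M" "x \<notin> M" using insert.hyps finite_subset by auto
    then show "card (insert x M) = Suc (card M)" by simp
  qed
  have fP: "finite (Pow T)" "finite (insert x ` Pow T)" using insert.hyps by auto
  have "(\<Sum>M\<in>Pow (insert x T). (-1::int) ^ card M)
     = (\<Sum>M\<in>Pow T. (-1::int) ^ card M) + (\<Sum>M\<in>insert x ` Pow T. (-1::int) ^ card M)"
    unfolding P by (rule sum.union_disjoint[OF fP D])
  also have "(\<Sum>M\<in>insert x ` Pow T. (-1::int) ^ card M) = (\<Sum>M\<in>Pow T. (-1::int) ^ card (insert x M))"
    by (rule sum.reindex[OF I, unfolded o_def])
  also have "\<dots> = (\<Sum>M\<in>Pow T. - ((-1::int) ^ card M))"
    by (rule sum.cong[OF refl]) (simp add: C)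
  finally show ?case by (simp add: sum_negf)
qed

lemma incl_excl:
  assumes "finite K" "finite X"
  shows "int (card {x\<in>X. \<forall>k\<in>K. \<not> P k x}) =
    (\<Sum>M\<in>Pow K. (-1)^card M * int (card {x\<in>X. \<forall>k\<in>M. P k x}))"
proof -
  have cnt: "\<And>Q. int (card {x\<in>X. Q x}) = (\<Sum>x\<in>X. if Q x then 1 else 0)"
    using assms(2) by (simp add: sum.If_cases Int_def)
  have "(\<Sum>M\<in>Pow K. (-1)^card M * int (card {x\<in>X. \<forall>k\<in>M. P k x}))
      = (\<Sum>M\<in>Pow K. \<Sum>x\<in>X. (if (\<forall>k\<in>M. P k x) then (-1)^card M else 0))"
    by (simp add: cnt sum_distrib_left if_distrib cong: if_cong)
  also have "\<dots> = (\<Sum>x\<in>X. \<Sum>M\<in>Pow K. (if (\<forall>k\<in>M. P k x) then (-1)^card M else 0))"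
    by (rule sum.swap)
  also have "\<dots> = (\<Sum>x\<in>X. \<Sum>M\<in>Pow {k\<in>K. P k x}. (-1::int)^card M)"
  proof (rule sum.cong[OF refl])
    fix x assume "x \<in> X"
    have "(\<Sum>M\<in>Pow K. (if (\<forall>k\<in>M. P k x) then (-1::int)^card M else 0))
        = (\<Sum>M\<in>{M\<in>Pow K. \<forall>k\<in>M. P k x}. (-1::int)^card M)"
      by (rule sum.inter_filter[symmetric]) (simp add: assms(1))
    also have "{M\<in>Pow K. \<forall>k\<in>M. P k x} = Pow {k\<in>K. P k x}" by auto
    finally show "(\<Sum>M\<in>Pow K. (if (\<forall>k\<in>M. P k x) then (-1::int)^card M else 0))
        = (\<Sum>M\<in>Pow {k\<in>K. P k x}. (-1::int)^card M)" .
  qed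
  also have "\<dots> = (\<Sum>x\<in>X. if (\<forall>k\<in>K. \<not> P k x) then 1 else 0)"
    using assms(1) by (intro sum.cong refl) (auto simp: sign_sum)
  finally show ?thesis by (simp add: cnt)
qed



definition gr :: "nat \<Rightarrow> (nat \<Rightarrow> nat) \<Rightarrow> (nat \<times> nat) set" where
  "gr N f = (\<lambda>i. (i, f i)) ` {..<N}"

definition PS :: "nat \<Rightarrow> (nat \<Rightarrow> nat \<Rightarrow> nat) set" where
  "PS n = (\<Pi>\<^sub>E p\<in>{..<n}. {f. f permutes {..<n}})"

definition phi :: "nat \<Rightarrow> (nat \<Rightarrow> nat \<Rightarrow> nat) \<Rightarrow> (nat \<Rightarrow> nat \<Rightarrow> nat) \<Rightarrow> nat \<Rightarrow> nat" where
  "phi n s t i = s (i div n) (i mod n) * n + t (s (i div n) (i mod n)) (i div n)"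

lemma gr_mem: "(i, j) \<in> gr N f \<longleftrightarrow> i < N \<and> j = f i"
  by (auto simp: gr_def)

lemma divmod_eq:
  fixes q b q' b' n :: nat
  assumes "b < n" "b' < n" "q * n + b = q' * n + b'"
  shows "q = q' \<and> b = b'"
proof -
  have "(q * n + b) div n = (q' * n + b') div n" "(q * n + b) mod n = (q' * n + b') mod n"
    using assms(3) by simp_all
  then show ?thesis using assms(1,2) by simp
qed

lemma lt_sq:
  fixes q b n :: nat
  assumes "q < n" "b < n"
  shows "q * n + b < n^2"
proof -
  have "q * n + b < q * n + n" using assms by simp
  also have "\<dots> = (q + 1) * n" by simp
  also have "\<dots> \<le> n * n" using assms(1) by (intro mult_right_mono) auto
  finally show ?thesis by (simp add: power2_eq_square)
qed

lemma sq_div: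
  fixes i n :: nat
  assumes "i < n^2"
  shows "i div n < n" "i mod n < n" "i div n * n + i mod n = i"
proof -
  have n0: "n > 0" using assms by (cases n) auto
  show "i div n < n" using assms by (simp add: power2_eq_square less_mult_imp_div_less)
  show "i mod n < n" using n0 by simp
  show "i div n * n + i mod n = i" by simp
qed

lemma PS_perm: "s \<in> PS n \<Longrightarrow> p < n \<Longrightarrow> s p permutes {..<n}"
  by (auto simp: PS_def)

lemma PS_lt: "s \<in> PS n \<Longrightarrow> p < n \<Longrightarrow> a < n \<Longrightarrow> s p a < n"
proof -
  assume "s \<in> PS n" "p < n" "a < n"
  then have "s p permutes {..<n}" using PS_perm by blast
  then have "s p a \<in> {..<n}" using \<open>a < n\<close> permutes_in_image[of "s p" "{..<n}" a] by simp
  then show ?thesis by simp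
qed

lemma PS_inj: "s \<in> PS n \<Longrightarrow> p < n \<Longrightarrow> a < n \<Longrightarrow> a' < n \<Longrightarrow> s p a = s p a' \<Longrightarrow> a = a'"
proof -
  assume "s \<in> PS n" "p < n" "s p a = s p a'"
  then have "s p permutes {..<n}" using PS_perm by blast
  then have "inj (s p)" by (rule permutes_inj)
  then show ?thesis using \<open>s p a = s p a'\<close> by (rule injD)
qed

lemma PS_inv:
  assumes "s \<in> PS n" "p < n" "q < n"
  shows "inv_into {..<n} (s p) q < n" "s p (inv_into {..<n} (s p) q) = q"
proof -
  have im: "s p ` {..<n} = {..<n}" using PS_perm[OF assms(1,2)] by (rule permutes_image)
  then show "inv_into {..<n} (s p) q < n" using assms(3) by (metis inv_into_into lessThan_iff)
  show "s p (inv_into {..<n} (s p) q) = q" using im assms(3) by (simp add: f_inv_into_f)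
qed

lemma PS_inv2:
  assumes "s \<in> PS n" "p < n" "a < n"
  shows "inv_into {..<n} (s p) (s p a) = a"
proof -
  have "s p permutes {..<n}" using assms(1,2) by (rule PS_perm)
  then have "inj_on (s p) {..<n}" by (rule permutes_inj_on)
  then show ?thesis using assms(3) by (simp add: inv_into_f_f)
qed

lemma phi_lt:
  assumes "s \<in> PS n" "t \<in> PS n" "i < n^2"
  shows "phi n s t i < n^2"
proof -
  have "s (i div n) (i mod n) < n" using PS_lt[OF assms(1)] sq_div[OF assms(3)] by simp
  moreover then have "t (s (i div n) (i mod n)) (i div n) < n" using PS_lt[OF assms(2)] sq_div[OF assms(3)] by simp
  ultimately show ?thesis unfolding phi_def by (rule lt_sq)
qed

lemma phi_at:
  assumes "p < n" "a < n"
  shows "phi n s t (p * n + a) = s p a * n + t (s p a) p"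
  using assms by (simp add: phi_def)

lemma phi_inj:
  assumes "s \<in> PS n" "t \<in> PS n"
  shows "inj_on (phi n s t) {..<n^2}"
proof (rule inj_onI)
  fix i i' assume i: "i \<in> {..<n^2}" and i': "i' \<in> {..<n^2}" and e: "phi n s t i = phi n s t i'"
  define p a p' a' where "p = i div n" "a = i mod n" "p' = i' div n" "a' = i' mod n"
  have lt: "p < n" "a < n" "p' < n" "a' < n" using i i' sq_div unfolding p_a_p'_a'_def by auto
  have ii: "i = p * n + a" "i' = p' * n + a'" using sq_div i i' unfolding p_a_p'_a'_def by auto
  have sl: "s p a < n" "s p' a' < n" using PS_lt[OF assms(1)] lt by auto
  have tl: "t (s p a) p < n" "t (s p' a') p' < n" using PS_lt[OF assms(2)] lt sl by auto
  have "s p a * n + t (s p a) p = s p' a' * n + t (s p' a') p'"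
    using e unfolding ii phi_at[OF lt(1,2)] phi_at[OF lt(3,4)] .
  then have "s p a = s p' a' \<and> t (s p a) p = t (s p' a') p'" by (rule divmod_eq[OF tl])
  then have e2: "s p a = s p' a'" "t (s p a) p = t (s p a) p'" by auto
  have "p = p'" using PS_inj[OF assms(2) sl(1) lt(1) lt(3) e2(2)] .
  then have "a = a'" using PS_inj[OF assms(1) lt(1) lt(2) lt(4)] e2(1) by simp
  show "i = i'" using ii \<open>p = p'\<close> \<open>a = a'\<close> by simp
qed

lemma phi_img:
  assumes "s \<in> PS n" "t \<in> PS n"
  shows "phi n s t ` {..<n^2} = {..<n^2}"
  by (rule endo_inj_surj) (use phi_inj[OF assms] phi_lt[OF assms] in auto)

lemma Phi_spm:
  assumes "s \<in> PS n" "t \<in> PS n"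
  shows "gr (n^2) (phi n s t) \<in> spm n"
proof -
  let ?f = "phi n s t" and ?N = "n^2"
  have bin: "gr ?N ?f \<in> binmat ?N"
    unfolding binmat_def gr_def using phi_lt[OF assms] by auto
  have row: "row_ones (gr ?N ?f) i = 1" if "i < ?N" for i
  proof -
    have "{j. (i, j) \<in> gr ?N ?f} = {?f i}" using that by (auto simp: gr_mem)
    then show ?thesis by (simp add: row_ones_def)
  qed
  have col: "col_ones (gr ?N ?f) j = 1" if "j < ?N" for j
  proof -
    have "j \<in> ?f ` {..<?N}" using phi_img[OF assms] that by simp
    then obtain i where i: "i < ?N" "?f i = j" by auto
    have "{i'. (i', j) \<in> gr ?N ?f} = {i}"
    proof (intro set_eqI iffI)
      fix i' assume "i' \<in> {i'. (i', j) \<in> gr ?N ?f}"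
      then have "i' < ?N" "?f i' = ?f i" using i by (auto simp: gr_mem)
      then show "i' \<in> {i}" using inj_onD[OF phi_inj[OF assms]] i(1) by simp
    qed (use i in \<open>simp add: gr_mem\<close>)
    then show ?thesis by (simp add: col_ones_def)
  qed
  have blk: "card {(i, j) \<in> gr ?N ?f. i div n = p \<and> j div n = q} = 1" if "p < n" "q < n" for p q
  proof -
    define a where "a = inv_into {..<n} (s p) q"
    have a: "a < n" "s p a = q" using PS_inv[OF assms(1) that] unfolding a_def by auto
    define i0 where "i0 = p * n + a"
    have tl: "t q p < n" using PS_lt[OF assms(2)] that by simp
    have "{(i, j) \<in> gr ?N ?f. i div n = p \<and> j div n = q} = {(i0, ?f i0)}"
    proof (intro set_eqI iffI)
      fix x assume "x \<in> {(i, j) \<in> gr ?N ?f. i div n = p \<and> j div n = q}"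
      then obtain i where x: "x = (i, ?f i)" "i < ?N" "i div n = p" "?f i div n = q"
        by (auto simp: gr_def)
      define m where "m = i mod n"
      have am: "m < n" "i = p * n + m" using sq_div[OF x(2)] x(3) unfolding m_def by auto
      have fi: "?f i = s p m * n + t (s p m) p" unfolding am(2) by (rule phi_at[OF that(1) am(1)])
      have "t (s p m) p < n" using PS_lt[OF assms(2)] PS_lt[OF assms(1)] that am by simp
      then have "s p m = q" using x(4) unfolding fi by simp
      then have "m = a" using PS_inj[OF assms(1) that(1) am(1) a(1)] a(2) by simp
      then have "i = i0" unfolding i0_def am(2) by simp
      then show "x \<in> {(i0, ?f i0)}" using x by simp
    next
      fix x assume "x \<in> {(i0, ?f i0)}"
      then have x: "x = (i0, ?f i0)" by simp
      have "i0 < ?N" unfolding i0_def using lt_sq that a by simp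
      moreover have "i0 div n = p" unfolding i0_def using a by simp
      moreover have "?f i0 = q * n + t q p" unfolding i0_def using phi_at that a by metis
      ultimately show "x \<in> {(i, j) \<in> gr ?N ?f. i div n = p \<and> j div n = q}"
        using x tl by (simp add: gr_mem)
    qed
    then show ?thesis by simp
  qed
  show ?thesis unfolding spm_def using bin row col blk by auto
qed



lemma gr_cong: "(\<And>i. i < N \<Longrightarrow> f i = g i) \<Longrightarrow> gr N f = gr N g"
  unfolding gr_def by auto

lemma PS_ext:
  assumes "s \<in> PS n" "s' \<in> PS n" "\<And>p a. p < n \<Longrightarrow> a < n \<Longrightarrow> s p a = s' p a"
  shows "s = s'"
proof (rule ext)
  fix p show "s p = s' p"
  proof (cases "p < n")
    case True
    have ps: "s p permutes {..<n}" "s' p permutes {..<n}"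
      by (rule PS_perm[OF assms(1) True], rule PS_perm[OF assms(2) True])
    show ?thesis
    proof (rule ext)
      fix a show "s p a = s' p a"
      proof (cases "a < n")
        case True then show ?thesis using assms(3) \<open>p < n\<close> by simp
      next
        case False
        then have "s p a = a" "s' p a = a" using permutes_not_in[OF ps(1)] permutes_not_in[OF ps(2)] by auto
        then show ?thesis by simp
      qed
    qed
  next
    case False
    then have "p \<notin> {..<n}" by simp
    then show ?thesis using PiE_arb[OF assms(1)[unfolded PS_def]] PiE_arb[OF assms(2)[unfolded PS_def]] by simp
  qed
qed

lemma Phi_inj:
  assumes "s \<in> PS n" "t \<in> PS n" "s' \<in> PS n" "t' \<in> PS n"
    and e: "gr (n^2) (phi n s t) = gr (n^2) (phi n s' t')"
  shows "s = s' \<and> t = t'"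
proof -
  have v: "phi n s t i = phi n s' t' i" if "i < n^2" for i
  proof -
    have "(i, phi n s t i) \<in> gr (n^2) (phi n s t)" using that by (simp add: gr_mem)
    then have "(i, phi n s t i) \<in> gr (n^2) (phi n s' t')" unfolding e .
    then show ?thesis by (simp add: gr_mem)
  qed
  have c: "s p a = s' p a \<and> t (s p a) p = t' (s p a) p" if "p < n" "a < n" for p a
  proof -
    have eq: "s p a * n + t (s p a) p = s' p a * n + t' (s' p a) p"
      using v[OF lt_sq[OF that]] unfolding phi_at[OF that] .
    have l1: "s p a < n" "s' p a < n" using PS_lt[OF assms(1) that] PS_lt[OF assms(3) that] .
    have l2: "t (s p a) p < n" "t' (s' p a) p < n"
      using PS_lt[OF assms(2) l1(1) that(1)] PS_lt[OF assms(4) l1(2) that(1)] .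
    have "s p a = s' p a \<and> t (s p a) p = t' (s' p a) p" by (rule divmod_eq[OF l2 eq])
    then show ?thesis by auto
  qed
  have ss: "s = s'" by (rule PS_ext[OF assms(1,3)]) (use c in simp)
  have "t = t'"
  proof (rule PS_ext[OF assms(2,4)])
    fix q p assume q: "q < n" and p: "p < n"
    define a where "a = inv_into {..<n} (s p) q"
    have a: "a < n" "s p a = q" using PS_inv[OF assms(1) p q] unfolding a_def by auto
    have "t (s p a) p = t' (s p a) p" by (rule conjunct2[OF c[OF p a(1)]])
    then show "t q p = t' q p" unfolding a(2) .
  qed
  then show ?thesis using ss by simp
qed

lemma spm_decomp:
  assumes B: "B \<in> spm n"
  shows "\<exists>s\<in>PS n. \<exists>t\<in>PS n. B = gr (n^2) (phi n s t)"
proof -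
  let ?N = "n^2"
  have bin: "B \<subseteq> {..<?N} \<times> {..<?N}" using B by (simp add: spm_def binmat_def)
  have rows: "\<And>i. i < ?N \<Longrightarrow> card {j. (i, j) \<in> B} = 1" using B by (simp add: spm_def row_ones_def)
  have cols: "\<And>j. j < ?N \<Longrightarrow> card {i. (i, j) \<in> B} = 1" using B by (simp add: spm_def col_ones_def)
  have blks: "\<And>p q. p < n \<Longrightarrow> q < n \<Longrightarrow> card {(i, j) \<in> B. i div n = p \<and> j div n = q} = 1"
    using B by (simp add: spm_def)
  define pi where "pi i = (THE j. (i, j) \<in> B)" for i
  have piB: "(i, pi i) \<in> B \<and> (\<forall>j. (i, j) \<in> B \<longrightarrow> j = pi i)" if iN: "i < ?N" for i
  proof -
    obtain j where j: "{j. (i, j) \<in> B} = {j}" using rows[OF iN] card_1_singletonE by blast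
    then have "\<And>j'. (i, j') \<in> B \<longleftrightarrow> j' = j" by blast
    then have "pi i = j" unfolding pi_def by simp
    then show ?thesis using \<open>\<And>j'. (i, j') \<in> B \<longleftrightarrow> j' = j\<close> by simp
  qed
  have piN: "pi i < ?N" if "i < ?N" for i using piB[OF that] bin by blast
  have Bgr: "B = gr ?N pi"
  proof (intro set_eqI iffI)
    fix x assume "x \<in> B"
    then obtain i j where x: "x = (i, j)" "(i, j) \<in> B" by (cases x) auto
    then have "i < ?N" using bin by blast
    then show "x \<in> gr ?N pi" using x piB by (simp add: gr_mem)
  next
    fix x assume "x \<in> gr ?N pi"
    then show "x \<in> B" using piB by (auto simp: gr_def)
  qed
  have piinj: "i = i'" if ii: "i < ?N" "i' < ?N" "pi i = pi i'" for i i'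
  proof -
    obtain k where k: "{k'. (k', pi i) \<in> B} = {k}" using cols[OF piN[OF ii(1)]] card_1_singletonE by blast
    have "(i, pi i) \<in> B" "(i', pi i') \<in> B" using conjunct1[OF piB[OF that(1)]] conjunct1[OF piB[OF that(2)]] .
    then have "i \<in> {k'. (k', pi i) \<in> B}" "i' \<in> {k'. (k', pi i) \<in> B}" using that(3) by simp_all
    then show ?thesis using k by auto
  qed
  have blk_uniq: "x = y" if "x \<in> B" "y \<in> B" "fst x div n = p" "snd x div n = q"
      "fst y div n = p" "snd y div n = q" "p < n" "q < n" for x y p q
  proof -
    note th = that
    obtain z where z: "{(i, j) \<in> B. i div n = p \<and> j div n = q} = {z}"
      using blks[OF th(7,8)] card_1_singletonE by blast
    have "x \<in> {(i, j) \<in> B. i div n = p \<and> j div n = q}" "y \<in> {(i, j) \<in> B. i div n = p \<and> j div n = q}"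
      using that by (auto simp: case_prod_beta)
    then show ?thesis using z by auto
  qed
  define s where "s = (\<lambda>p\<in>{..<n}. \<lambda>a. if a < n then pi (p * n + a) div n else a)"
  have sp: "s p a = pi (p * n + a) div n" if "p < n" "a < n" for p a using that by (simp add: s_def)
  have s_inj: "a = a'" if "p < n" "a < n" "a' < n" "s p a = s p a'" for p a a'
  proof -
    have i1: "p * n + a < ?N" "p * n + a' < ?N" using lt_sq that by auto
    have q: "pi (p * n + a) div n < n" using sq_div(1)[OF piN[OF i1(1)]] .
    have e: "pi (p * n + a') div n = pi (p * n + a) div n" using that(4) unfolding sp[OF that(1,2)] sp[OF that(1,3)] by simp
    have "(p * n + a, pi (p * n + a)) = (p * n + a', pi (p * n + a'))"
      by (rule blk_uniq[OF conjunct1[OF piB[OF i1(1)]] conjunct1[OF piB[OF i1(2)]] _ _ _ _ that(1) q])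
         (use that(2,3) e in simp_all)
    then show ?thesis by simp
  qed
  have sPS: "s \<in> PS n"
    unfolding PS_def
  proof (rule PiE_I)
    fix p assume "p \<in> {..<n}"
    then have p: "p < n" by simp
    have img: "s p ` {..<n} \<subseteq> {..<n}"
    proof
      fix x assume "x \<in> s p ` {..<n}"
      then obtain a where a: "a < n" "x = s p a" by auto
      have "pi (p * n + a) div n < n" using sq_div(1)[OF piN[OF lt_sq[OF p a(1)]]] .
      then show "x \<in> {..<n}" using a sp[OF p a(1)] by simp
    qed
    have inj: "inj_on (s p) {..<n}" by (rule inj_onI) (use s_inj p in simp)
    have "bij_betw (s p) {..<n} {..<n}"
      unfolding bij_betw_def using inj endo_inj_surj[OF _ img inj] by simp
    moreover have "\<And>x. x \<notin> {..<n} \<Longrightarrow> s p x = x" using p by (simp add: s_def)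
    ultimately have "s p permutes {..<n}" by (rule bij_imp_permutes)
    then show "s p \<in> {f. f permutes {..<n}}" by simp
  next
    fix p assume "p \<notin> {..<n}" then show "s p = undefined" by (simp add: s_def)
  qed
  define t where "t = (\<lambda>q\<in>{..<n}. \<lambda>p. if p < n then pi (p * n + inv_into {..<n} (s p) q) mod n else p)"
  have tp: "t q p = pi (p * n + inv_into {..<n} (s p) q) mod n" if "q < n" "p < n" for p q
    using that by (simp add: t_def)
  have tPS: "t \<in> PS n"
    unfolding PS_def
  proof (rule PiE_I)
    fix q assume "q \<in> {..<n}"
    then have q: "q < n" by simp
    have img: "t q ` {..<n} \<subseteq> {..<n}"
    proof
      fix x assume "x \<in> t q ` {..<n}"
      then obtain p where "p < n" "x = t q p" by auto
      then show "x \<in> {..<n}" using tp q by (cases n) auto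
    qed
    have inj: "inj_on (t q) {..<n}"
    proof (rule inj_onI)
      fix p p' assume p: "p \<in> {..<n}" and p': "p' \<in> {..<n}" and e: "t q p = t q p'"
      define a a' where "a = inv_into {..<n} (s p) q" "a' = inv_into {..<n} (s p') q"
      have a: "a < n" "s p a = q" "a' < n" "s p' a' = q"
        using PS_inv[OF sPS _ q] p p' unfolding a_a'_def by simp_all
      have i1: "p * n + a < ?N" "p' * n + a' < ?N" using lt_sq p p' a by auto
      have pl: "p < n" "p' < n" using p p' by auto
      have d: "pi (p * n + a) div n = pi (p' * n + a') div n"
        using a(2,4) sp[OF pl(1) a(1)] sp[OF pl(2) a(3)] by simp
      have m: "pi (p * n + a) mod n = pi (p' * n + a') mod n" using e tp q p p' unfolding a_a'_def by simp
      have "pi (p * n + a) = pi (p * n + a) div n * n + pi (p * n + a) mod n" by simp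
      also have "\<dots> = pi (p' * n + a') div n * n + pi (p' * n + a') mod n" by (simp only: d m)
      also have "\<dots> = pi (p' * n + a')" by simp
      finally have "pi (p * n + a) = pi (p' * n + a')" .
      then have "p * n + a = p' * n + a'" using piinj i1 by blast
      then show "p = p'" using divmod_eq[OF a(1) a(3)] by blast
    qed
    have "bij_betw (t q) {..<n} {..<n}"
      unfolding bij_betw_def using inj endo_inj_surj[OF _ img inj] by simp
    moreover have "\<And>x. x \<notin> {..<n} \<Longrightarrow> t q x = x" using q by (simp add: t_def)
    ultimately have "t q permutes {..<n}" by (rule bij_imp_permutes)
    then show "t q \<in> {f. f permutes {..<n}}" by simp
  next
    fix q assume "q \<notin> {..<n}" then show "t q = undefined" by (simp add: t_def)
  qed
  have "phi n s t i = pi i" if i: "i < ?N" for i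
  proof -
    define p a where "p = i div n" "a = i mod n"
    have pa: "p < n" "a < n" "i = p * n + a" using sq_div[OF i] unfolding p_a_def by auto
    define q where "q = pi i div n"
    have q: "q < n" unfolding q_def using sq_div(1)[OF piN[OF i]] .
    have sq: "s p a = q" unfolding q_def using sp[OF pa(1,2)] pa(3) by simp
    have "t q p = pi (p * n + a) mod n" using tp[OF q pa(1)] sq PS_inv2[OF sPS pa(1,2)] by simp
    then have "t q p = pi i mod n" using pa(3) by simp
    then have "phi n s t (p * n + a) = pi i div n * n + pi i mod n"
      unfolding phi_at[OF pa(1,2)] sq q_def by simp
    then show ?thesis using pa(3) by simp
  qed
  then have "B = gr ?N (phi n s t)" unfolding Bgr by (intro gr_cong) simp
  then show ?thesis using sPS tPS by blast
qed



definition ia :: "nat \<Rightarrow> (nat \<Rightarrow> nat \<Rightarrow> nat) \<Rightarrow> nat \<Rightarrow> nat \<Rightarrow> nat" where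
  "ia n s p q = inv_into {..<n} (s p) q"

definition cell :: "nat \<Rightarrow> (nat \<Rightarrow> nat \<Rightarrow> nat) \<Rightarrow> (nat \<Rightarrow> nat \<Rightarrow> nat) \<Rightarrow> nat \<times> nat \<Rightarrow> nat \<times> nat" where
  "cell n sA tA k = (fst k * n + ia n sA (fst k) (snd k), snd k * n + tA (snd k) (fst k))"

lemma cell_mem:
  assumes "sA \<in> PS n" "tA \<in> PS n" "s \<in> PS n" "t \<in> PS n" "p < n" "q < n"
  shows "cell n sA tA (p, q) \<in> gr (n^2) (phi n s t) \<longleftrightarrow>
     s p (ia n sA p q) = q \<and> t q p = tA q p"
proof -
  define a where "a = ia n sA p q"
  have a: "a < n" "sA p a = q" using PS_inv[OF assms(1,5,6)] unfolding a_def ia_def by auto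
  have l1: "s p a < n" using PS_lt[OF assms(3,5) a(1)] .
  have l2: "t (s p a) p < n" "tA q p < n" using PS_lt[OF assms(4) l1 assms(5)] PS_lt[OF assms(2,6,5)] .
  have "cell n sA tA (p, q) \<in> gr (n^2) (phi n s t) \<longleftrightarrow> q * n + tA q p = s p a * n + t (s p a) p"
    unfolding cell_def fst_conv snd_conv a_def[symmetric] gr_mem phi_at[OF assms(5) a(1)] using lt_sq[OF assms(5) a(1)] by simp
  also have "\<dots> \<longleftrightarrow> s p a = q \<and> t q p = tA q p"
  proof
    assume "q * n + tA q p = s p a * n + t (s p a) p"
    then have "q = s p a \<and> tA q p = t (s p a) p" by (rule divmod_eq[OF l2(2) l2(1)])
    then show "s p a = q \<and> t q p = tA q p" by auto
  qed auto
  finally show ?thesis unfolding a_def .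
qed

lemma A_cells:
  assumes "sA \<in> PS n" "tA \<in> PS n"
  shows "gr (n^2) (phi n sA tA) = cell n sA tA ` ({..<n} \<times> {..<n})"
proof (intro set_eqI iffI)
  fix x assume "x \<in> gr (n^2) (phi n sA tA)"
  then obtain i where x: "x = (i, phi n sA tA i)" "i < n^2" by (auto simp: gr_def)
  define p a where "p = i div n" "a = i mod n"
  have pa: "p < n" "a < n" "i = p * n + a" using sq_div[OF x(2)] unfolding p_a_def by auto
  define q where "q = sA p a"
  have q: "q < n" unfolding q_def by (rule PS_lt[OF assms(1) pa(1,2)])
  have "ia n sA p q = a" unfolding ia_def q_def by (rule PS_inv2[OF assms(1) pa(1,2)])
  then have "cell n sA tA (p, q) = x"
    unfolding cell_def x(1) pa(3) phi_at[OF pa(1,2)] q_def by simp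
  then show "x \<in> cell n sA tA ` ({..<n} \<times> {..<n})" using pa q by force
next
  fix x assume "x \<in> cell n sA tA ` ({..<n} \<times> {..<n})"
  then obtain p q where pq: "p < n" "q < n" "x = cell n sA tA (p, q)" by auto
  have "cell n sA tA (p, q) \<in> gr (n^2) (phi n sA tA)"
    using cell_mem[OF assms assms pq(1,2)] PS_inv(2)[OF assms(1) pq(1,2)] unfolding ia_def by simp
  then show "x \<in> gr (n^2) (phi n sA tA)" using pq(3) by simp
qed



lemma spm_img: "spm n = (\<lambda>x. gr (n^2) (phi n (fst x) (snd x))) ` (PS n \<times> PS n)"
proof (intro set_eqI iffI)
  fix B assume "B \<in> spm n"
  then obtain s t where "s \<in> PS n" "t \<in> PS n" "B = gr (n^2) (phi n s t)" using spm_decomp by blast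
  then show "B \<in> (\<lambda>x. gr (n^2) (phi n (fst x) (snd x))) ` (PS n \<times> PS n)" by force
next
  fix B assume "B \<in> (\<lambda>x. gr (n^2) (phi n (fst x) (snd x))) ` (PS n \<times> PS n)"
  then obtain s t where "s \<in> PS n" "t \<in> PS n" "B = gr (n^2) (phi n s t)" by auto
  then show "B \<in> spm n" using Phi_spm by simp
qed

lemma Phi_inj_on: "inj_on (\<lambda>x. gr (n^2) (phi n (fst x) (snd x))) (PS n \<times> PS n)"
proof (rule inj_onI)
  fix x y assume "x \<in> PS n \<times> PS n" "y \<in> PS n \<times> PS n"
    "gr (n^2) (phi n (fst x) (snd x)) = gr (n^2) (phi n (fst y) (snd y))"
  then have "fst x = fst y \<and> snd x = snd y" using Phi_inj[of "fst x" n "snd x" "fst y" "snd y"] by auto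
  then show "x = y" by (simp add: prod_eq_iff)
qed

lemma X1_eq:
  assumes "sA \<in> PS n" "M \<subseteq> {..<n} \<times> {..<n}"
  shows "{s \<in> PS n. \<forall>(p, q)\<in>M. s p (ia n sA p q) = q} =
    (\<Pi>\<^sub>E p\<in>{..<n}. {f. f permutes {..<n} \<and> (\<forall>x\<in>ia n sA p ` {q. (p, q) \<in> M}. f x = sA p x)})"
proof (intro set_eqI iffI)
  fix s assume s: "s \<in> {s \<in> PS n. \<forall>(p, q)\<in>M. s p (ia n sA p q) = q}"
  then have sPS: "s \<in> PS n" and c: "\<And>p q. (p, q) \<in> M \<Longrightarrow> s p (ia n sA p q) = q" by auto
  show "s \<in> (\<Pi>\<^sub>E p\<in>{..<n}. {f. f permutes {..<n} \<and> (\<forall>x\<in>ia n sA p ` {q. (p, q) \<in> M}. f x = sA p x)})"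
  proof (rule PiE_I)
    fix p assume p: "p \<in> {..<n}"
    have "s p permutes {..<n}" using PS_perm[OF sPS] p by simp
    moreover have "\<forall>x\<in>ia n sA p ` {q. (p, q) \<in> M}. s p x = sA p x"
    proof
      fix x assume "x \<in> ia n sA p ` {q. (p, q) \<in> M}"
      then obtain q where q: "(p, q) \<in> M" "x = ia n sA p q" by auto
      have "q < n" using q(1) assms(2) by auto
      then have "sA p x = q" using PS_inv(2)[OF assms(1)] p q(2) unfolding ia_def by simp
      then show "s p x = sA p x" using c[OF q(1)] q(2) by simp
    qed
    ultimately show "s p \<in> {f. f permutes {..<n} \<and> (\<forall>x\<in>ia n sA p ` {q. (p, q) \<in> M}. f x = sA p x)}" by simp
  next
    fix p assume "p \<notin> {..<n}" then show "s p = undefined" using PiE_arb[OF sPS[unfolded PS_def]] by simp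
  qed
next
  fix s assume s: "s \<in> (\<Pi>\<^sub>E p\<in>{..<n}. {f. f permutes {..<n} \<and> (\<forall>x\<in>ia n sA p ` {q. (p, q) \<in> M}. f x = sA p x)})"
  have sub: "(\<Pi>\<^sub>E p\<in>{..<n}. {f. f permutes {..<n} \<and> (\<forall>x\<in>ia n sA p ` {q. (p, q) \<in> M}. f x = sA p x)})
     \<subseteq> (\<Pi>\<^sub>E p\<in>{..<n}. {f. f permutes {..<n}})" by (rule PiE_mono) blast
  have sPS: "s \<in> PS n" unfolding PS_def using sub s by (rule subsetD)
  have "s p (ia n sA p q) = q" if pq: "(p, q) \<in> M" for p q
  proof -
    have pq': "p < n" "q < n" using pq assms(2) by auto
    have "s p \<in> {f. f permutes {..<n} \<and> (\<forall>x\<in>ia n sA p ` {q. (p, q) \<in> M}. f x = sA p x)}"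
      using PiE_mem[OF s] pq' by simp
    then have "\<forall>x\<in>ia n sA p ` {q. (p, q) \<in> M}. s p x = sA p x" by simp
    moreover have "ia n sA p q \<in> ia n sA p ` {q. (p, q) \<in> M}" using pq by simp
    ultimately have "s p (ia n sA p q) = sA p (ia n sA p q)" by blast
    also have "\<dots> = q" using PS_inv(2)[OF assms(1) pq'] unfolding ia_def .
    finally show ?thesis .
  qed
  then show "s \<in> {s \<in> PS n. \<forall>(p, q)\<in>M. s p (ia n sA p q) = q}" using sPS by auto
qed

lemma X2_eq:
  assumes "M \<subseteq> {..<n} \<times> {..<n}"
  shows "{t \<in> PS n. \<forall>(p, q)\<in>M. t q p = tA q p} =
    (\<Pi>\<^sub>E q\<in>{..<n}. {f. f permutes {..<n} \<and> (\<forall>x\<in>{p. (p, q) \<in> M}. f x = tA q x)})"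
proof (intro set_eqI iffI)
  fix t assume t: "t \<in> {t \<in> PS n. \<forall>(p, q)\<in>M. t q p = tA q p}"
  then have tPS: "t \<in> PS n" and c: "\<And>p q. (p, q) \<in> M \<Longrightarrow> t q p = tA q p" by auto
  show "t \<in> (\<Pi>\<^sub>E q\<in>{..<n}. {f. f permutes {..<n} \<and> (\<forall>x\<in>{p. (p, q) \<in> M}. f x = tA q x)})"
  proof (rule PiE_I)
    fix q assume q: "q \<in> {..<n}"
    have "t q permutes {..<n}" using PS_perm[OF tPS] q by simp
    then show "t q \<in> {f. f permutes {..<n} \<and> (\<forall>x\<in>{p. (p, q) \<in> M}. f x = tA q x)}" using c by simp
  next
    fix q assume "q \<notin> {..<n}" then show "t q = undefined" using PiE_arb[OF tPS[unfolded PS_def]] by simp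
  qed
next
  fix t assume t: "t \<in> (\<Pi>\<^sub>E q\<in>{..<n}. {f. f permutes {..<n} \<and> (\<forall>x\<in>{p. (p, q) \<in> M}. f x = tA q x)})"
  have sub: "(\<Pi>\<^sub>E q\<in>{..<n}. {f. f permutes {..<n} \<and> (\<forall>x\<in>{p. (p, q) \<in> M}. f x = tA q x)})
     \<subseteq> (\<Pi>\<^sub>E p\<in>{..<n}. {f. f permutes {..<n}})" by (rule PiE_mono) blast
  have tPS: "t \<in> PS n" unfolding PS_def using sub t by (rule subsetD)
  have "t q p = tA q p" if pq: "(p, q) \<in> M" for p q
  proof -
    have "q < n" using pq assms by auto
    then have "t q \<in> {f. f permutes {..<n} \<and> (\<forall>x\<in>{p. (p, q) \<in> M}. f x = tA q x)}"
      using PiE_mem[OF t] by simp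
    then show ?thesis using pq by simp
  qed
  then show "t \<in> {t \<in> PS n. \<forall>(p, q)\<in>M. t q p = tA q p}" using tPS by auto
qed

lemma card_X1:
  assumes "sA \<in> PS n" "M \<subseteq> {..<n} \<times> {..<n}"
  shows "card {s \<in> PS n. \<forall>(p, q)\<in>M. s p (ia n sA p q) = q} = (\<Prod>p<n. fact (n - row_ones M p))"
proof -
  have "card {s \<in> PS n. \<forall>(p, q)\<in>M. s p (ia n sA p q) = q} =
    (\<Prod>p<n. card {f. f permutes {..<n} \<and> (\<forall>x\<in>ia n sA p ` {q. (p, q) \<in> M}. f x = sA p x)})"
    unfolding X1_eq[OF assms] by (simp add: card_PiE)
  also have "\<dots> = (\<Prod>p<n. fact (n - row_ones M p))"
  proof (rule prod.cong[OF refl])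
    fix p assume "p \<in> {..<n}"
    then have p: "p < n" by simp
    have perm: "sA p permutes {..<n}" by (rule PS_perm[OF assms(1) p])
    have Mp: "{q. (p, q) \<in> M} \<subseteq> {..<n}" using assms(2) by auto
    have im: "sA p ` {..<n} = {..<n}" by (rule permutes_image[OF perm])
    have D: "ia n sA p ` {q. (p, q) \<in> M} \<subseteq> {..<n}"
      using Mp PS_inv(1)[OF assms(1) p] unfolding ia_def by auto
    have injD: "inj_on (ia n sA p) {q. (p, q) \<in> M}"
      unfolding ia_def by (rule inj_on_inv_into) (use Mp im in simp)
    have cD: "card (ia n sA p ` {q. (p, q) \<in> M}) = row_ones M p"
      unfolding row_ones_def by (rule card_image[OF injD])
    have "card {f. f permutes {..<n} \<and> (\<forall>x\<in>ia n sA p ` {q. (p, q) \<in> M}. f x = sA p x)}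
        = fact (card {..<n} - card (ia n sA p ` {q. (p, q) \<in> M}))"
      by (rule perm_count[OF _ D]) (use permutes_inj_on[OF perm] D im in auto)
    then show "card {f. f permutes {..<n} \<and> (\<forall>x\<in>ia n sA p ` {q. (p, q) \<in> M}. f x = sA p x)}
        = fact (n - row_ones M p)" using cD by simp
  qed
  finally show ?thesis .
qed

lemma card_X2:
  assumes "tA \<in> PS n" "M \<subseteq> {..<n} \<times> {..<n}"
  shows "card {t \<in> PS n. \<forall>(p, q)\<in>M. t q p = tA q p} = (\<Prod>q<n. fact (n - col_ones M q))"
proof -
  have "card {t \<in> PS n. \<forall>(p, q)\<in>M. t q p = tA q p} =
    (\<Prod>q<n. card {f. f permutes {..<n} \<and> (\<forall>x\<in>{p. (p, q) \<in> M}. f x = tA q x)})"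
    unfolding X2_eq[OF assms(2)] by (simp add: card_PiE)
  also have "\<dots> = (\<Prod>q<n. fact (n - col_ones M q))"
  proof (rule prod.cong[OF refl])
    fix q assume "q \<in> {..<n}"
    then have q: "q < n" by simp
    have perm: "tA q permutes {..<n}" by (rule PS_perm[OF assms(1) q])
    have Mq: "{p. (p, q) \<in> M} \<subseteq> {..<n}" using assms(2) by auto
    have im: "tA q ` {..<n} = {..<n}" by (rule permutes_image[OF perm])
    have "card {f. f permutes {..<n} \<and> (\<forall>x\<in>{p. (p, q) \<in> M}. f x = tA q x)}
        = fact (card {..<n} - card {p. (p, q) \<in> M})"
      by (rule perm_count[OF _ Mq]) (use permutes_inj_on[OF perm] Mq im in auto)
    then show "card {f. f permutes {..<n} \<and> (\<forall>x\<in>{p. (p, q) \<in> M}. f x = tA q x)}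
        = fact (n - col_ones M q)" by (simp add: col_ones_def)
  qed
  finally show ?thesis .
qed

lemma count_contains:
  assumes "sA \<in> PS n" "tA \<in> PS n" "M \<subseteq> {..<n} \<times> {..<n}"
  shows "card {B \<in> spm n. \<forall>k\<in>M. cell n sA tA k \<in> B}
    = (\<Prod>p<n. fact (n - row_ones M p)) * (\<Prod>q<n. fact (n - col_ones M q))"
proof -
  let ?F = "\<lambda>x. gr (n^2) (phi n (fst x) (snd x))"
  let ?X1 = "{s \<in> PS n. \<forall>(p, q)\<in>M. s p (ia n sA p q) = q}"
  let ?X2 = "{t \<in> PS n. \<forall>(p, q)\<in>M. t q p = tA q p}"
  have cm: "(\<forall>k\<in>M. cell n sA tA k \<in> gr (n^2) (phi n s t)) \<longleftrightarrow>
      (\<forall>(p, q)\<in>M. s p (ia n sA p q) = q) \<and> (\<forall>(p, q)\<in>M. t q p = tA q p)"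
    if st: "s \<in> PS n" "t \<in> PS n" for s t
  proof -
    have "\<And>p q. (p, q) \<in> M \<Longrightarrow> cell n sA tA (p, q) \<in> gr (n^2) (phi n s t) \<longleftrightarrow>
       s p (ia n sA p q) = q \<and> t q p = tA q p"
      using cell_mem[OF assms(1,2) st] assms(3) by blast
    then show ?thesis by fast
  qed
  have "{B \<in> spm n. \<forall>k\<in>M. cell n sA tA k \<in> B} = ?F ` (?X1 \<times> ?X2)"
  proof (intro set_eqI iffI)
    fix B assume B: "B \<in> {B \<in> spm n. \<forall>k\<in>M. cell n sA tA k \<in> B}"
    then obtain x where x: "x \<in> PS n \<times> PS n" "B = ?F x" using spm_img by blast
    have "x \<in> ?X1 \<times> ?X2" using x B cm[of "fst x" "snd x"] by (auto simp: mem_Times_iff)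
    then show "B \<in> ?F ` (?X1 \<times> ?X2)" using x(2) by blast
  next
    fix B assume "B \<in> ?F ` (?X1 \<times> ?X2)"
    then obtain s t where st: "s \<in> ?X1" "t \<in> ?X2" "B = gr (n^2) (phi n s t)" by auto
    have "B \<in> spm n" using st Phi_spm by simp
    moreover have "\<forall>k\<in>M. cell n sA tA k \<in> B" using st cm[of s t] by simp
    ultimately show "B \<in> {B \<in> spm n. \<forall>k\<in>M. cell n sA tA k \<in> B}" by simp
  qed
  moreover have "inj_on ?F (?X1 \<times> ?X2)" by (rule inj_on_subset[OF Phi_inj_on]) auto
  ultimately have "card {B \<in> spm n. \<forall>k\<in>M. cell n sA tA k \<in> B} = card ?X1 * card ?X2"
    by (simp add: card_image card_cartesian_product)
  then show ?thesis using card_X1[OF assms(1,3)] card_X2[OF assms(2,3)] by simp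
qed



definition rowmap :: "(nat \<Rightarrow> nat) \<Rightarrow> nat \<times> nat \<Rightarrow> nat \<times> nat" where
  "rowmap s = (\<lambda>(i, j). (s i, j))"

lemma rowmap_inj: "inj s \<Longrightarrow> inj (rowmap s)"
  unfolding rowmap_def inj_def by auto

lemma rowmap_mem: "inj s \<Longrightarrow> (s i, j) \<in> rowmap s ` A \<longleftrightarrow> (i, j) \<in> A"
  unfolding rowmap_def inj_def by force

lemma rowmap_comp: "rowmap s ` rowmap t ` A = rowmap (s \<circ> t) ` A"
  unfolding rowmap_def image_image by (simp add: case_prod_beta)

lemma rowmap_id: "rowmap id ` A = A"
  unfolding rowmap_def by (simp add: case_prod_beta)

lemma row_equiv_equiv: "equiv (binmat n) (row_equiv n)"
proof (rule equivI)
  show "row_equiv n \<subseteq> binmat n \<times> binmat n" unfolding row_equiv_def by auto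
  show "refl_on (binmat n) (row_equiv n)"
  proof (rule refl_onI)
    fix A assume "A \<in> binmat n"
    moreover have "id permutes {..<n}" by (rule permutes_id)
    moreover have "A = (\<lambda>(i, j). (id i, j)) ` A" using rowmap_id[of A] unfolding rowmap_def by simp
    ultimately show "(A, A) \<in> row_equiv n" unfolding row_equiv_def by blast
  qed
  show "sym (row_equiv n)"
  proof (rule symI)
    fix A B assume "(A, B) \<in> row_equiv n"
    then obtain s where s: "A \<in> binmat n" "B \<in> binmat n" "s permutes {..<n}" "B = rowmap s ` A"
      unfolding row_equiv_def rowmap_def by blast
    have "rowmap (inv s) ` B = rowmap (inv s \<circ> s) ` A" unfolding s(4) rowmap_comp ..
    also have "inv s \<circ> s = id" by (rule permutes_inv_o(2)[OF s(3)])
    finally have "rowmap (inv s) ` B = rowmap id ` A" .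
    then have "A = rowmap (inv s) ` B" unfolding rowmap_id by simp
    then show "(B, A) \<in> row_equiv n" unfolding row_equiv_def rowmap_def
      using s(1,2) permutes_inv[OF s(3)] by blast
  qed
  show "trans (row_equiv n)"
  proof (rule transI)
    fix A B C assume "(A, B) \<in> row_equiv n" "(B, C) \<in> row_equiv n"
    then obtain s t where st: "A \<in> binmat n" "C \<in> binmat n" "s permutes {..<n}" "B = rowmap s ` A"
      "t permutes {..<n}" "C = rowmap t ` B"
      unfolding row_equiv_def rowmap_def by blast
    have "C = rowmap (t \<circ> s) ` A" unfolding st(6) st(4) rowmap_comp ..
    moreover have "t \<circ> s permutes {..<n}" by (rule permutes_compose[OF st(3,5)])
    ultimately show "(A, C) \<in> row_equiv n" unfolding row_equiv_def rowmap_def using st(1,2) by blast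
  qed
qed

lemma row_equiv_inv:
  assumes "(A, B) \<in> row_equiv n"
  shows "eps A = eps B" "psi n k A = psi n k B"
proof -
  obtain s where s: "A \<in> binmat n" "B \<in> binmat n" "s permutes {..<n}" "B = rowmap s ` A"
    using assms unfolding row_equiv_def rowmap_def by blast
  have inj: "inj s" by (rule permutes_inj[OF s(3)])
  show "eps A = eps B" unfolding eps_def s(4) by (simp add: card_image inj_on_subset[OF rowmap_inj[OF inj]])
  have ro: "row_ones B (s i) = row_ones A i" for i
    unfolding row_ones_def s(4) rowmap_mem[OF inj] ..
  have co: "col_ones B j = col_ones A j" for j
  proof -
    have "{i. (i, j) \<in> B} = s ` {i. (i, j) \<in> A}"
    proof (intro set_eqI iffI)
      fix i assume "i \<in> {i. (i, j) \<in> B}"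
      then have "(s (inv s i), j) \<in> rowmap s ` A" using s(4) permutes_inverses(1)[OF s(3)] by simp
      then have "(inv s i, j) \<in> A" using rowmap_mem[OF inj] by blast
      then show "i \<in> s ` {i. (i, j) \<in> A}" using permutes_inverses(1)[OF s(3)] by (metis image_eqI mem_Collect_eq)
    next
      fix i assume "i \<in> s ` {i. (i, j) \<in> A}"
      then obtain i' where "i = s i'" "(i', j) \<in> A" by auto
      then show "i \<in> {i. (i, j) \<in> B}" using s(4) rowmap_mem[OF inj] by simp
    qed
    then show ?thesis unfolding col_ones_def by (simp add: card_image inj_on_subset[OF inj])
  qed
  have "{i. i < n \<and> row_ones B i = k} = s ` {i. i < n \<and> row_ones A i = k}"
  proof (intro set_eqI iffI)
    fix i assume i: "i \<in> {i. i < n \<and> row_ones B i = k}"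
    have "inv s i < n" using i permutes_in_image[OF permutes_inv[OF s(3)], of i] by simp
    moreover have "row_ones A (inv s i) = k" using ro[of "inv s i"] i permutes_inverses(1)[OF s(3)] by simp
    ultimately show "i \<in> s ` {i. i < n \<and> row_ones A i = k}"
      using permutes_inverses(1)[OF s(3), of i] by (metis (mono_tags, lifting) image_eqI mem_Collect_eq)
  next
    fix i assume "i \<in> s ` {i. i < n \<and> row_ones A i = k}"
    then obtain i' where i': "i = s i'" "i' < n" "row_ones A i' = k" by auto
    have "s i' < n" using i'(2) permutes_in_image[OF s(3), of i'] by simp
    then show "i \<in> {i. i < n \<and> row_ones B i = k}" using i' ro by simp
  qed
  then have "r_k n k B = r_k n k A" unfolding r_k_def by (simp add: card_image inj_on_subset[OF inj])
  moreover have "c_k n k B = c_k n k A" unfolding c_k_def co ..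
  ultimately show "psi n k A = psi n k B" unfolding psi_def by simp
qed



definition fM :: "nat \<Rightarrow> (nat \<times> nat) set \<Rightarrow> nat" where
  "fM n M = (\<Prod>p<n. fact (n - row_ones M p)) * (\<Prod>q<n. fact (n - col_ones M q))"

definition gM :: "nat \<Rightarrow> (nat \<times> nat) set \<Rightarrow> int" where
  "gM n M = (-1) ^ eps M * (\<Prod>i = 0..n - 2. int (fact (n - i)) ^ psi n i M)"

lemma prod_group_pow:
  fixes g :: "nat \<Rightarrow> nat"
  assumes "finite S" "finite T" "h ` S \<subseteq> T"
  shows "(\<Prod>x\<in>S. g (h x)) = (\<Prod>k\<in>T. g k ^ card {x \<in> S. h x = k})"
proof -
  have "(\<Prod>x\<in>S. g (h x)) = (\<Prod>k\<in>T. \<Prod>x\<in>{x \<in> S. h x = k}. g (h x))"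
    by (rule prod.group[symmetric, OF assms])
  also have "\<dots> = (\<Prod>k\<in>T. g k ^ card {x \<in> S. h x = k})"
  proof (rule prod.cong[OF refl])
    fix k
    have "(\<Prod>x\<in>{x \<in> S. h x = k}. g (h x)) = (\<Prod>x\<in>{x \<in> S. h x = k}. g k)"
      by (rule prod.cong) auto
    then show "(\<Prod>x\<in>{x \<in> S. h x = k}. g (h x)) = g k ^ card {x \<in> S. h x = k}" by simp
  qed
  finally show ?thesis .
qed

lemma ro_le: "M \<subseteq> {..<n} \<times> {..<n} \<Longrightarrow> row_ones M p \<le> n"
proof -
  assume M: "M \<subseteq> {..<n} \<times> {..<n}"
  have "{j. (p, j) \<in> M} \<subseteq> {..<n}" using M by auto
  then have "card {j. (p, j) \<in> M} \<le> card {..<n::nat}" by (rule card_mono[rotated]) simp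
  then show ?thesis by (simp add: row_ones_def)
qed

lemma co_le: "M \<subseteq> {..<n} \<times> {..<n} \<Longrightarrow> col_ones M q \<le> n"
proof -
  assume M: "M \<subseteq> {..<n} \<times> {..<n}"
  have "{i. (i, q) \<in> M} \<subseteq> {..<n}" using M by auto
  then have "card {i. (i, q) \<in> M} \<le> card {..<n::nat}" by (rule card_mono[rotated]) simp
  then show ?thesis by (simp add: col_ones_def)
qed

lemma fM_eq:
  assumes n: "n \<ge> 2" and M: "M \<in> binmat n"
  shows "fM n M = (\<Prod>i = 0..n - 2. fact (n - i) ^ psi n i M)"
proof -
  have M': "M \<subseteq> {..<n} \<times> {..<n}" using M by (simp add: binmat_def)
  have "(\<Prod>p<n. fact (n - row_ones M p)) = (\<Prod>k\<in>{0..n}. fact (n - k) ^ card {p \<in> {..<n}. row_ones M p = k} :: nat)"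
    by (rule prod_group_pow[where g = "\<lambda>k. fact (n - k)" and h = "row_ones M" and S = "{..<n}" and T = "{0..n}"]) (use ro_le[OF M'] in auto)
  also have "\<dots> = (\<Prod>k\<in>{0..n}. fact (n - k) ^ r_k n k M)" unfolding r_k_def by simp
  finally have R: "(\<Prod>p<n. fact (n - row_ones M p)) = (\<Prod>k\<in>{0..n}. fact (n - k) ^ r_k n k M :: nat)" .
  have "(\<Prod>q<n. fact (n - col_ones M q)) = (\<Prod>k\<in>{0..n}. fact (n - k) ^ card {q \<in> {..<n}. col_ones M q = k} :: nat)"
    by (rule prod_group_pow[where g = "\<lambda>k. fact (n - k)" and h = "col_ones M" and S = "{..<n}" and T = "{0..n}"]) (use co_le[OF M'] in auto)
  also have "\<dots> = (\<Prod>k\<in>{0..n}. fact (n - k) ^ c_k n k M)" unfolding c_k_def by simp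
  finally have C: "(\<Prod>q<n. fact (n - col_ones M q)) = (\<Prod>k\<in>{0..n}. fact (n - k) ^ c_k n k M :: nat)" .
  have "fM n M = (\<Prod>k\<in>{0..n}. fact (n - k) ^ psi n k M)"
    unfolding fM_def R C psi_def power_add prod.distrib ..
  also have "\<dots> = (\<Prod>k\<in>{0..n - 2}. fact (n - k) ^ psi n k M)"
  proof (rule prod.mono_neutral_left[symmetric])
    show "finite {0..n}" by simp
    show "{0..n - 2} \<subseteq> {0..n}" by auto
    show "\<forall>i\<in>{0..n} - {0..n - 2}. fact (n - i) ^ psi n i M = (1::nat)"
    proof
      fix i assume "i \<in> {0..n} - {0..n - 2}"
      then have "n - i = 0 \<or> n - i = 1" using n by auto
      then have "fact (n - i) = (1::nat)" by auto
      then show "fact (n - i) ^ psi n i M = (1::nat)" by simp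
    qed
  qed
  finally show ?thesis .
qed

lemma gM_eq:
  assumes "n \<ge> 2" "M \<in> binmat n"
  shows "(-1) ^ card M * int (fM n M) = gM n M"
  unfolding gM_def fM_eq[OF assms] eps_def by (simp add: of_nat_prod)

lemma ro_single: "row_ones {(p0, q0)} p = (if p = p0 then 1 else 0)"
  unfolding row_ones_def by auto

lemma co_single: "col_ones {(p0, q0)} q = (if q = q0 then 1 else 0)"
  unfolding col_ones_def by auto

lemma prod_single:
  assumes "p0 < n"
  shows "(\<Prod>p<n. fact (n - (if p = p0 then 1 else 0))) = fact (n - 1) * fact n ^ (n - 1)"
proof -
  have "(\<Prod>p<n. fact (n - (if p = p0 then 1 else 0))) =
     fact (n - 1) * (\<Prod>p\<in>{..<n} - {p0}. fact (n - (if p = p0 then 1 else 0)))"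
    using prod.remove[of "{..<n}" p0 "\<lambda>p. fact (n - (if p = p0 then 1 else 0))"] assms by simp
  also have "(\<Prod>p\<in>{..<n} - {p0}. fact (n - (if p = p0 then 1 else 0))) = (\<Prod>p\<in>{..<n} - {p0}. fact n)"
    by (rule prod.cong) auto
  also have "\<dots> = fact n ^ (n - 1)" using assms by simp
  finally show ?thesis .
qed

lemma fM_empty: "fM n {} = fact n ^ n * fact n ^ n"
  unfolding fM_def row_ones_def col_ones_def by simp

lemma fM_single:
  assumes "p0 < n" "q0 < n"
  shows "fM n {(p0, q0)} = (fact (n - 1) * fact n ^ (n - 1)) * (fact (n - 1) * fact n ^ (n - 1))"
  unfolding fM_def ro_single co_single prod_single[OF assms(1)] prod_single[OF assms(2)] ..

lemma small_sum:
  assumes n: "n \<ge> 1"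
  shows "(\<Sum>M\<in>{M \<in> binmat n. eps M < 2}. (-1) ^ card M * int (fM n M)) = 0"
proof -
  let ?K = "{..<n} \<times> {..<n}"
  have set: "{M \<in> binmat n. eps M < 2} = insert {} ((\<lambda>k. {k}) ` ?K)"
  proof (intro set_eqI iffI)
    fix M assume M: "M \<in> {M \<in> binmat n. eps M < 2}"
    then have fin: "finite M" and sub: "M \<subseteq> ?K" and c: "card M < 2"
      by (auto simp: binmat_def eps_def intro: finite_subset)
    then have "card M = 0 \<or> card M = 1" by linarith
    then show "M \<in> insert {} ((\<lambda>k. {k}) ` ?K)"
    proof
      assume "card M = 0" then show ?thesis using fin by simp
    next
      assume "card M = 1"
      then obtain k where "M = {k}" by (rule card_1_singletonE)
      then show ?thesis using sub by auto
    qed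
  next
    fix M assume "M \<in> insert {} ((\<lambda>k. {k}) ` ?K)"
    then show "M \<in> {M \<in> binmat n. eps M < 2}" by (auto simp: binmat_def eps_def)
  qed
  have nin: "{} \<notin> (\<lambda>k. {k}) ` ?K" by auto
  have inj: "inj_on (\<lambda>k. {k}) ?K" by (auto intro: inj_onI)
  define X :: nat where "X = fact (n - 1) * fact n ^ (n - 1)"
  have nX: "n * X = fact n ^ n"
  proof -
    have "n * X = (n * fact (n - 1)) * fact n ^ (n - 1)" unfolding X_def by simp
    also have "n * fact (n - 1) = (fact n :: nat)" using fact_reduce[of n, where 'a = nat] n by simp
    also have "fact n * fact n ^ (n - 1) = (fact n ^ n :: nat)"
      using n by (metis Suc_diff_1 less_le_trans power_Suc zero_less_one)
    finally show ?thesis .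
  qed
  have "(\<Sum>M\<in>{M \<in> binmat n. eps M < 2}. (-1) ^ card M * int (fM n M))
      = int (fM n {}) + (\<Sum>k\<in>?K. (-1) ^ card {k} * int (fM n {k}))"
    unfolding set using nin inj by (simp add: sum.reindex)
  also have "(\<Sum>k\<in>?K. (-1) ^ card {k} * int (fM n {k})) = (\<Sum>k\<in>?K. - int (X * X))"
    by (rule sum.cong[OF refl]) (auto simp: fM_single X_def)
  also have "\<dots> = - int (n * n * (X * X))" by (simp add: card_cartesian_product)
  also have "n * n * (X * X) = (n * X) * (n * X)" by simp
  also have "int (fM n {}) = int ((n * X) * (n * X))" unfolding fM_empty nX ..
  finally show ?thesis by simp
qed



lemma finite_binmat: "finite (binmat n)" unfolding binmat_def by simp

lemma rep_in: "C \<in> classes n \<Longrightarrow> rep C \<in> C"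
proof -
  assume C: "C \<in> classes n"
  have "C \<noteq> {}" using in_quotient_imp_non_empty[OF row_equiv_equiv C[unfolded classes_def]] .
  then have "\<exists>A. A \<in> C" by blast
  then show ?thesis unfolding rep_def by (rule someI_ex)
qed

lemma gM_cls:
  assumes C: "C \<in> classes n" and M: "M \<in> C"
  shows "gM n M = gM n (rep C)"
proof -
  have "(rep C, M) \<in> row_equiv n"
    using in_quotient_imp_in_rel[OF row_equiv_equiv C[unfolded classes_def]] rep_in[OF C] M by simp
  then have "eps (rep C) = eps M" "\<And>k. psi n k (rep C) = psi n k M" using row_equiv_inv by blast+
  then show ?thesis unfolding gM_def by simp
qed

lemma class_sum:
  "(\<Sum>M\<in>{M \<in> binmat n. 2 \<le> eps M}. gM n M) =
   (\<Sum>C \<in> {C \<in> classes n. eps (rep C) \<ge> 2}.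
       (-1) ^ eps (rep C) * int (card C) *
       (\<Prod>i = 0..n - 2. int (fact (n - i)) ^ psi n i (rep C)))"
proof -
  let ?CL = "{C \<in> classes n. eps (rep C) \<ge> 2}"
  have E: "equiv (binmat n) (row_equiv n)" by (rule row_equiv_equiv)
  have U: "\<Union>?CL = {M \<in> binmat n. 2 \<le> eps M}"
  proof (intro set_eqI iffI)
    fix M assume "M \<in> \<Union>?CL"
    then obtain C where C: "C \<in> classes n" "eps (rep C) \<ge> 2" "M \<in> C" by auto
    have "M \<in> binmat n" using in_quotient_imp_subset[OF E C(1)[unfolded classes_def]] C(3) by blast
    moreover have "(rep C, M) \<in> row_equiv n"
      using in_quotient_imp_in_rel[OF E C(1)[unfolded classes_def]] rep_in[OF C(1)] C(3) by simp
    then have "eps M = eps (rep C)" using row_equiv_inv by metis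
    ultimately show "M \<in> {M \<in> binmat n. 2 \<le> eps M}" using C(2) by simp
  next
    fix M assume M: "M \<in> {M \<in> binmat n. 2 \<le> eps M}"
    define C where "C = row_equiv n `` {M}"
    have C: "C \<in> classes n" unfolding C_def classes_def using M by (simp add: quotientI)
    have "M \<in> C" unfolding C_def using M by (intro equiv_class_self[OF E]) simp
    have "(rep C, M) \<in> row_equiv n"
      using in_quotient_imp_in_rel[OF E C[unfolded classes_def]] rep_in[OF C] \<open>M \<in> C\<close> by simp
    then have "eps M = eps (rep C)" using row_equiv_inv by metis
    then show "M \<in> \<Union>?CL" using C \<open>M \<in> C\<close> M by auto
  qed
  have finC: "\<forall>C\<in>?CL. finite C"
  proof
    fix C assume "C \<in> ?CL"
    then have "C \<subseteq> binmat n" using in_quotient_imp_subset[OF E] unfolding classes_def by blast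
    then show "finite C" using finite_binmat finite_subset by blast
  qed
  have disj: "\<forall>A\<in>?CL. \<forall>B\<in>?CL. A \<noteq> B \<longrightarrow> A \<inter> B = {}"
    using quotient_disj[OF E] unfolding classes_def by blast
  have "(\<Sum>M\<in>{M \<in> binmat n. 2 \<le> eps M}. gM n M) = (\<Sum>C\<in>?CL. \<Sum>M\<in>C. gM n M)"
    unfolding U[symmetric] using sum.Union_disjoint[OF finC disj] by simp
  also have "\<dots> = (\<Sum>C\<in>?CL. (-1) ^ eps (rep C) * int (card C) *
       (\<Prod>i = 0..n - 2. int (fact (n - i)) ^ psi n i (rep C)))"
  proof (rule sum.cong[OF refl])
    fix C assume "C \<in> ?CL"
    then have C: "C \<in> classes n" by simp
    have "(\<Sum>M\<in>C. gM n M) = (\<Sum>M\<in>C. gM n (rep C))" by (rule sum.cong[OF refl]) (rule gM_cls[OF C])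
    also have "\<dots> = int (card C) * gM n (rep C)" by simp
    finally show "(\<Sum>M\<in>C. gM n M) = (-1) ^ eps (rep C) * int (card C) *
       (\<Prod>i = 0..n - 2. int (fact (n - i)) ^ psi n i (rep C))" unfolding gM_def by (simp add: ac_simps)
  qed
  finally show ?thesis .
qed



theorem mainTheorem5:
  fixes n :: nat and A :: "(nat \<times> nat) set"
  assumes "n \<ge> 2" and "A \<in> spm n"
  shows "int (card {B \<in> spm n. disjoint_mat A B}) =
    (\<Sum>C \<in> {C \<in> classes n. eps (rep C) \<ge> 2}.
       (-1) ^ eps (rep C) * int (card C) *
       (\<Prod>i = 0..n - 2. int (fact (n - i)) ^ psi n i (rep C)))"
proof -
  let ?K = "{..<n} \<times> {..<n}"
  obtain sA tA where sA: "sA \<in> PS n" and tA: "tA \<in> PS n" and A: "A = gr (n^2) (phi n sA tA)"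
    using spm_decomp[OF assms(2)] by blast
  have AK: "A = cell n sA tA ` ?K" unfolding A by (rule A_cells[OF sA tA])
  have finS: "finite (spm n)"
    by (rule finite_subset[of _ "binmat (n^2)"]) (auto simp: spm_def finite_binmat)
  have "{B \<in> spm n. disjoint_mat A B} = {B \<in> spm n. \<forall>k\<in>?K. \<not> cell n sA tA k \<in> B}"
    unfolding disjoint_mat_def AK by blast
  then have "int (card {B \<in> spm n. disjoint_mat A B}) =
      (\<Sum>M\<in>Pow ?K. (-1)^card M * int (card {B \<in> spm n. \<forall>k\<in>M. cell n sA tA k \<in> B}))"
    using incl_excl[of ?K "spm n" "\<lambda>k B. cell n sA tA k \<in> B"] finS by simp
  also have "\<dots> = (\<Sum>M\<in>binmat n. (-1)^card M * int (fM n M))"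
    unfolding binmat_def
  proof (rule sum.cong[OF refl])
    fix M assume "M \<in> Pow ?K"
    then have "M \<subseteq> ?K" by simp
    then show "(-1)^card M * int (card {B \<in> spm n. \<forall>k\<in>M. cell n sA tA k \<in> B}) = (-1)^card M * int (fM n M)"
      using count_contains[OF sA tA] unfolding fM_def by simp
  qed
  also have "\<dots> = (\<Sum>M\<in>{M \<in> binmat n. 2 \<le> eps M}. (-1)^card M * int (fM n M)) +
      (\<Sum>M\<in>{M \<in> binmat n. eps M < 2}. (-1)^card M * int (fM n M))"
  proof -
    have "binmat n = {M \<in> binmat n. 2 \<le> eps M} \<union> {M \<in> binmat n. eps M < 2}" by auto
    moreover have "{M \<in> binmat n. 2 \<le> eps M} \<inter> {M \<in> binmat n. eps M < 2} = {}" by auto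
    ultimately show ?thesis using finite_binmat[of n]
      by (metis (no_types, lifting) finite_Un sum.union_disjoint)
  qed
  also have "(\<Sum>M\<in>{M \<in> binmat n. eps M < 2}. (-1)^card M * int (fM n M)) = 0"
    by (rule small_sum) (use assms(1) in simp)
  also have "(\<Sum>M\<in>{M \<in> binmat n. 2 \<le> eps M}. (-1)^card M * int (fM n M)) =
      (\<Sum>M\<in>{M \<in> binmat n. 2 \<le> eps M}. gM n M)"
    by (rule sum.cong[OF refl]) (use gM_eq[OF assms(1)] in simp)
  finally show ?thesis using class_sum by simp
qed


end
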